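(* Let $1\le k\le n-1$ and let $\lambda$ be a Young diagram fitting inside the $k\times(n-k)$ rectangle. Then $$X_\lambda\,\mathbf 1=w_\lambda(\mathbf 1)+\sum_{\varepsilon\in E}f_\varepsilon\,\varepsilon$$ for some rational functions $f_\varepsilon\in\mathbb Q(v)$ each of which has a zero of order $\ge1$ at $v=0$.
   Context: Let $\mathcal H$ be the Hecke algebra of $S_n$ over $\mathbb Q(v)$, generated by $T_1,\dots,T_{n-1}$ with braid relations and $(T_i-v)(T_i+v^{-1})=0$. Let $E$ be the set of sequences of $n$ signs $\pm$ with exactly $k$ pluses; $S_n$ acts on $E$ by permuting positions ($s_i$ swaps entries $i,i+1$). Let $M=\bigoplus_{\varepsilon\in E}\mathbb Q(v)\varepsilon$ with $\mathcal H$-action: $T_i\varepsilon=s_i\varepsilon$ if $(\varepsilon_i,\varepsilon_{i+1})=(+,-)$; $T_i\varepsilon=-v^{-1}\varepsilon$ if $(\varepsilon_i,\varepsilon_{i+1})\in\{(+,+),(-,-)\}$; $T_i\varepsilon=s_i\varepsilon+(v-v^{-1})\varepsilon$ if $(\varepsilon_i,\varepsilon_{i+1})=(-,+)$. Let $\mathbf 1=(+^k,-^{n-k})$. For a Young diagram $\lambda$ with rows $\lambda_1\ge\dots\ge\lambda_\ell>0$ ($\ell\le k$, $\lambda_1\le n-k$) and boxes $(i,j)$, $1\le j\le\lambda_i$: $w_\lambda=P_\ell\cdots P_1\in S_n$ with $P_i=s_{k+\lambda_i-i}s_{k+\lambda_i-i-1}\cdots s_{k+1-i}$; $r_{ij}=\max(r_{i,j+1},r_{i+1,j})+1$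 with $r_{ij}=0$ for $(i,j)\notin\lambda$; $[r]=(v^r-v^{-r})/(v-v^{-1})$; $X_\lambda=Q_\ell\cdots Q_1$ with $Q_i=\prod_{j=\lambda_i}^{1}\bigl(T_{k+j-i}-v^{r_{ij}}/[r_{ij}]\bigr)$, factors ordered from $j=\lambda_i$ (leftmost) to $j=1$ (rightmost). *)

theory Defs
  imports "HOL-Computational_Algebra.Polynomial" "HOL-Computational_Algebra.Fraction_Field"
begin

type_synonym qv = "rat poly fract"

definition vv :: qv where "vv = Fract [:0, 1:] 1"

definition vanishes_at_0 :: "qv \<Rightarrow> bool" where
  "vanishes_at_0 f \<longleftrightarrow> (\<exists>p q. q \<noteq> 0 \<and> poly q 0 \<noteq> 0 \<and> poly p 0 = 0 \<and> f = Fract p q)"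

definition qint :: "nat \<Rightarrow> qv" where
  "qint r = (vv ^ r - inverse vv ^ r) / (vv - inverse vv)"

text \<open>Sign sequences: True = +, False = -. Positions are 1..n (list index p-1).\<close>
definition seqs :: "nat \<Rightarrow> nat \<Rightarrow> bool list set" where
  "seqs n k = {e. length e = n \<and> length (filter id e) = k}"

definition one_seq :: "nat \<Rightarrow> nat \<Rightarrow> bool list" where
  "one_seq n k = replicate k True @ replicate (n - k) False"

definition s_act :: "nat \<Rightarrow> bool list \<Rightarrow> bool list" where
  "s_act i e = e[i - 1 := e ! i, i := e ! (i - 1)]"

text \<open>Vectors of M are functions from sequences to Q(v); the basis vector of e.\<close>
definition bvec :: "bool list \<Rightarrow> bool list \<Rightarrow> qv" where
  "bvec e = (\<lambda>d. if d = e then 1 else 0)"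

definition T_basis :: "nat \<Rightarrow> bool list \<Rightarrow> bool list \<Rightarrow> qv" where
  "T_basis i e =
     (if e ! (i - 1) \<and> \<not> e ! i then bvec (s_act i e)
      else if e ! (i - 1) = e ! i then (\<lambda>d. - inverse vv * bvec e d)
      else (\<lambda>d. bvec (s_act i e) d + (vv - inverse vv) * bvec e d))"

definition T_act :: "nat \<Rightarrow> nat \<Rightarrow> nat \<Rightarrow> (bool list \<Rightarrow> qv) \<Rightarrow> bool list \<Rightarrow> qv" where
  "T_act n k i x = (\<lambda>d. \<Sum>e\<in>seqs n k. x e * T_basis i e d)"

definition young_in_rect :: "nat \<Rightarrow> nat \<Rightarrow> nat list \<Rightarrow> bool" where
  "young_in_rect n k lam \<longleftrightarrow> sorted_wrt (\<ge>) lam \<and> (\<forall>x\<in>set lam. 0 < x \<and> x \<le> n - k)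
      \<and> length lam \<le> k"

definition in_diag :: "nat list \<Rightarrow> nat \<Rightarrow> nat \<Rightarrow> bool" where
  "in_diag lam i j \<longleftrightarrow> 1 \<le> i \<and> i \<le> length lam \<and> 1 \<le> j \<and> j \<le> lam ! (i - 1)"

function rr :: "nat list \<Rightarrow> nat \<Rightarrow> nat \<Rightarrow> nat" where
  "rr lam i j = (if in_diag lam i j then max (rr lam i (j + 1)) (rr lam (i + 1) j) + 1 else 0)"
  by auto
termination
proof (relation "measure (\<lambda>(lam, i, j). length lam + sum_list lam + 1 - (i + j))", goal_cases)
  case 1 then show ?case by simp
next
  case (2 lam i j)
  then have "lam ! (i - 1) \<le> sum_list lam"
    by (intro member_le_sum_list) (auto simp: in_diag_def)
  with 2 show ?case by (auto simp: in_diag_def)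
next
  case (3 lam i j)
  then have "lam ! (i - 1) \<le> sum_list lam"
    by (intro member_le_sum_list) (auto simp: in_diag_def)
  with 3 show ?case by (auto simp: in_diag_def)
qed

text \<open>Boxes listed in order of application to a vector:
  Q_1 first (i = 1 first); within Q_i the rightmost factor j = 1 first.\<close>
definition boxes :: "nat list \<Rightarrow> (nat \<times> nat) list" where
  "boxes lam = concat (map (\<lambda>i. map (\<lambda>j. (i, j)) [1..<lam ! (i - 1) + 1]) [1..<length lam + 1])"

definition w_act :: "nat \<Rightarrow> nat list \<Rightarrow> bool list \<Rightarrow> bool list" where
  "w_act k lam e = fold (\<lambda>(i, j) e'. s_act (k + j - i) e') (boxes lam) e"

definition X_act :: "nat \<Rightarrow> nat \<Rightarrow> nat list \<Rightarrow> (bool list \<Rightarrow> qv) \<Rightarrow> bool list \<Rightarrow> qv" where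
  "X_act n k lam x = fold (\<lambda>(i, j) y.
      (let r = rr lam i j in (\<lambda>d. T_act n k (k + j - i) y d - vv ^ r / qint r * y d)))
     (boxes lam) x"

end

theory Submission
  imports Defs
begin

definition reg :: "qv \<Rightarrow> bool" where
  "reg f \<longleftrightarrow> (\<exists>p q. q \<noteq> 0 \<and> poly q 0 \<noteq> 0 \<and> f = Fract p q)"

definition ordge :: "nat \<Rightarrow> qv \<Rightarrow> bool" where
  "ordge m f \<longleftrightarrow> (\<exists>g. reg g \<and> f = vv ^ m * g)"

lemma reg_Fract1: "reg (Fract p 1)"
  unfolding reg_def by (rule exI[of _ p], rule exI[of _ 1]) simp

lemma reg_0: "reg 0" using reg_Fract1[of 0] by (simp add: fract_collapse)
lemma reg_1: "reg 1" using reg_Fract1[of 1] by (simp add: fract_collapse)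
lemma reg_vv: "reg vv" unfolding vv_def by (rule reg_Fract1)

lemma reg_add: "reg f \<Longrightarrow> reg g \<Longrightarrow> reg (f + g)"
proof -
  assume "reg f" "reg g"
  then obtain p q p' q' where "q \<noteq> 0" "poly q 0 \<noteq> 0" "f = Fract p q"
    "q' \<noteq> 0" "poly q' 0 \<noteq> 0" "g = Fract p' q'" unfolding reg_def by blast
  then show ?thesis unfolding reg_def
    by (intro exI[of _ "p * q' + p' * q"] exI[of _ "q * q'"]) simp
qed

lemma reg_mult: "reg f \<Longrightarrow> reg g \<Longrightarrow> reg (f * g)"
proof -
  assume "reg f" "reg g"
  then obtain p q p' q' where "q \<noteq> 0" "poly q 0 \<noteq> 0" "f = Fract p q"
    "q' \<noteq> 0" "poly q' 0 \<noteq> 0" "g = Fract p' q'" unfolding reg_def by blast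
  then show ?thesis unfolding reg_def
    by (intro exI[of _ "p * p'"] exI[of _ "q * q'"]) simp
qed

lemma reg_uminus: "reg f \<Longrightarrow> reg (- f)"
proof -
  assume "reg f"
  then obtain p q where "q \<noteq> 0" "poly q 0 \<noteq> 0" "f = Fract p q" unfolding reg_def by blast
  then show ?thesis unfolding reg_def
    by (intro exI[of _ "- p"] exI[of _ "q"]) simp
qed

lemma reg_diff: "reg f \<Longrightarrow> reg g \<Longrightarrow> reg (f - g)"
  using reg_add[of f "- g"] reg_uminus[of g] by simp

lemma reg_power: "reg f \<Longrightarrow> reg (f ^ m)"
  by (induction m) (auto intro: reg_mult reg_1)

lemma ordge_0: "ordge m 0"
  unfolding ordge_def using reg_0 by auto

lemma ordge_add: "ordge m f \<Longrightarrow> ordge m g \<Longrightarrow> ordge m (f + g)"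
proof -
  assume "ordge m f" "ordge m g"
  then obtain a b where "reg a" "f = vv ^ m * a" "reg b" "g = vv ^ m * b" unfolding ordge_def by blast
  then show ?thesis unfolding ordge_def
    by (intro exI[of _ "a + b"]) (simp add: reg_add distrib_left)
qed

lemma ordge_uminus: "ordge m f \<Longrightarrow> ordge m (- f)"
proof -
  assume "ordge m f"
  then obtain a where "reg a" "f = vv ^ m * a" unfolding ordge_def by blast
  then show ?thesis unfolding ordge_def
    by (intro exI[of _ "- a"]) (simp add: reg_uminus)
qed

lemma ordge_diff: "ordge m f \<Longrightarrow> ordge m g \<Longrightarrow> ordge m (f - g)"
  using ordge_add[of m f "- g"] ordge_uminus[of m g] by simp

lemma ordge_mult: "ordge a f \<Longrightarrow> ordge b g \<Longrightarrow> ordge (a + b) (f * g)"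
proof -
  assume "ordge a f" "ordge b g"
  then obtain x y where "reg x" "f = vv ^ a * x" "reg y" "g = vv ^ b * y" unfolding ordge_def by blast
  then show ?thesis unfolding ordge_def
    by (intro exI[of _ "x * y"]) (simp add: reg_mult power_add algebra_simps)
qed

lemma ordge_mono: "ordge m f \<Longrightarrow> m' \<le> m \<Longrightarrow> ordge m' f"
  unfolding ordge_def
proof (elim exE conjE)
  fix g assume g: "reg g" "f = vv ^ m * g" and le: "m' \<le> m"
  have "f = vv ^ m' * (vv ^ (m - m') * g)"
    using g le by (simp add: mult.assoc[symmetric] power_add[symmetric])
  moreover have "reg (vv ^ (m - m') * g)" using g reg_vv by (auto intro: reg_mult reg_power)
  ultimately show "\<exists>g. reg g \<and> f = vv ^ m' * g" by blast
qed

lemma ordge_reg: "reg f \<Longrightarrow> ordge 0 f"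
  unfolding ordge_def by auto

lemma vv_ne0: "vv \<noteq> 0"
  unfolding vv_def by (simp add: Zero_fract_def eq_fract)

lemma vv_power: "vv ^ m = Fract (monom 1 m) 1"
proof (induction m)
  case 0 then show ?case by (simp add: fract_collapse)
next
  case (Suc m)
  have "monom (1::rat) 1 * monom 1 m = monom 1 (Suc m)" by (simp add: mult_monom)
  then show ?case using Suc by (simp add: vv_def monom_Suc mult.commute)
qed

lemma ordge_vv: "ordge m (vv ^ m)"
  unfolding ordge_def using reg_1 by auto

lemma ordge_inv: "ordge (Suc m) f \<Longrightarrow> ordge m (inverse vv * f)"
  unfolding ordge_def using vv_ne0 by (auto simp: field_simps)

lemma vanishes_ordge1: "ordge 1 f \<Longrightarrow> vanishes_at_0 f"
  unfolding ordge_def reg_def vanishes_at_0_def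
proof (elim exE conjE)
  fix g p q assume "q \<noteq> 0" "poly q 0 \<noteq> 0" "g = Fract p q" "f = vv ^ 1 * g"
  then show "\<exists>p q. q \<noteq> 0 \<and> poly q 0 \<noteq> 0 \<and> poly p 0 = 0 \<and> f = Fract p q"
    by (intro exI[of _ "[:0,1:] * p"] exI[of _ q]) (simp add: vv_def)
qed

lemma c_identity:
  fixes x y :: "'a::field"
  assumes x0: "x \<noteq> 0" and y0: "y \<noteq> 0" and x2: "x * x \<noteq> 1" and y2: "y * y \<noteq> 1"
  shows "y / ((y - inverse y) / (x - inverse x)) = (y * y / x) * ((x * x - 1) / (y * y - 1))"
proof -
  have a: "x - inverse x = (x * x - 1) / x" using x0 by (simp add: field_simps)
  have b: "y - inverse y = (y * y - 1) / y" using y0 by (simp add: field_simps)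
  have n1: "x * x - 1 \<noteq> 0" using x2 by simp
  have n2: "y * y - 1 \<noteq> 0" using y2 by simp
  show ?thesis unfolding a b using x0 y0 n1 n2 by (simp add: field_simps)
qed

lemma vv_power_ne1: "m > 0 \<Longrightarrow> vv ^ m \<noteq> 1"
proof
  assume m: "m > 0" and "vv ^ m = 1"
  then have "Fract (monom (1::rat) m) 1 = Fract 1 1" by (simp add: vv_power fract_collapse)
  then have "monom (1::rat) m = 1" by (simp add: eq_fract)
  then have "degree (monom (1::rat) m) = 0" by simp
  with m show False by (simp add: degree_monom_eq)
qed

lemma reg_c: "m > 0 \<Longrightarrow> reg ((vv * vv - 1) / (vv ^ m - 1))"
proof -
  assume m: "m > 0"
  have e1: "vv * vv = Fract (monom 1 2) 1" using vv_power[of 2] by (simp add: power2_eq_square)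
  have "(vv * vv - 1) / (vv ^ m - 1) = Fract (monom 1 2 - 1) (monom 1 m - 1)"
    unfolding e1 vv_power One_fract_def by simp
  moreover have "monom (1::rat) m - 1 \<noteq> 0"
    using vv_power_ne1[OF m] by (auto simp: vv_power fract_collapse)
  moreover have "poly (monom (1::rat) m - 1) 0 \<noteq> 0"
    using m by (simp add: poly_monom zero_power)
  ultimately show ?thesis unfolding reg_def by blast
qed

definition cc :: "nat \<Rightarrow> qv" where "cc r = vv ^ r / qint r"

lemma ordge_cc: "r \<ge> 1 \<Longrightarrow> ordge (2 * r - 1) (cc r)"
proof -
  assume r: "r \<ge> 1"
  have vr0: "vv ^ r \<noteq> 0" using vv_ne0 by simp
  have vr1: "vv ^ r * vv ^ r \<noteq> 1" using vv_power_ne1[of "r + r"] r by (simp add: power_add)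
  have v1: "vv * vv \<noteq> 1" using vv_power_ne1[of 2] by (simp add: power2_eq_square)
  have "cc r = (vv ^ r * vv ^ r / vv) * ((vv * vv - 1) / (vv ^ r * vv ^ r - 1))"
    unfolding cc_def qint_def power_inverse by (rule c_identity[OF vv_ne0 vr0 v1 vr1])
  moreover have "vv ^ r * vv ^ r / vv = vv ^ (2 * r - 1)"
  proof -
    have "vv ^ r * vv ^ r = vv * vv ^ (2 * r - 1)" using r
      by (simp add: mult_2 flip: power_add power_Suc)
    then show ?thesis using vv_ne0 by simp
  qed
  moreover have "reg ((vv * vv - 1) / (vv ^ r * vv ^ r - 1))"
    using reg_c[of "r + r"] r by (simp add: power_add)
  ultimately show ?thesis unfolding ordge_def by auto
qed


section \<open>Swaps\<close>

lemma s_act_length [simp]: "length (s_act t e) = length e"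
  by (simp add: s_act_def)

lemma s_act_nth:
  assumes "1 \<le> t" "t < length e" "q < length e"
  shows "s_act t e ! q = (if q = t - 1 then e ! t else if q = t then e ! (t - 1) else e ! q)"
  using assms by (auto simp: s_act_def nth_list_update)

lemma s_act_invol:
  assumes "1 \<le> t" "t < length e"
  shows "s_act t (s_act t e) = e"
  by (rule nth_equalityI) (use assms in \<open>auto simp: s_act_nth\<close>)

lemma s_act_seqs:
  assumes "e \<in> seqs n k" "1 \<le> t" "t < n"
  shows "s_act t e \<in> seqs n k"
proof -
  have len: "length e = n" using assms(1) by (simp add: seqs_def)
  have "mset (s_act t e) = mset e"
    unfolding s_act_def using assms(2,3) len by (intro mset_swap) auto
  then have "length (filter id (s_act t e)) = length (filter id e)"
    by (metis mset_filter size_mset)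
  then show ?thesis using assms(1) by (simp add: seqs_def)
qed

lemma seqs_length: "e \<in> seqs n k \<Longrightarrow> length e = n"
  by (simp add: seqs_def)

lemma bvec_sum: "finite S \<Longrightarrow> (\<Sum>e\<in>S. x e * bvec e d) = (if d \<in> S then x d else 0)"
  unfolding bvec_def by (simp add: if_distrib cong: if_cong)

lemma finite_seqs: "finite (seqs n k)"
proof -
  have "seqs n k \<subseteq> {xs. set xs \<subseteq> UNIV \<and> length xs = n}" by (auto simp: seqs_def)
  moreover have "finite {xs. set xs \<subseteq> (UNIV::bool set) \<and> length xs = n}"
    by (rule finite_lists_length_eq) simp
  ultimately show ?thesis by (rule finite_subset)
qed

definition diagc :: "nat \<Rightarrow> bool list \<Rightarrow> qv" where
  "diagc t e = (if e ! (t - 1) = e ! t then - inverse vv else if e ! (t - 1) then 0 else vv - inverse vv)"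

lemma T_basis_alt:
  "T_basis t e d = (if e ! (t - 1) \<noteq> e ! t \<and> d = s_act t e then 1 else 0)
                   + (if d = e then diagc t e else 0)"
  unfolding T_basis_def bvec_def diagc_def by auto

lemma T_act_formula:
  assumes d: "d \<in> seqs n k" and t: "1 \<le> t" "t < n"
  shows "T_act n k t x d =
    (if d ! (t - 1) = d ! t then - inverse vv * x d
     else if d ! (t - 1) then x (s_act t d)
     else x (s_act t d) + (vv - inverse vv) * x d)"
proof -
  let ?S = "seqs n k"
  have lend: "length d = n" using d by (simp add: seqs_def)
  have sd: "s_act t d \<in> ?S" using s_act_seqs[OF d t] .
  have "T_act n k t x d = (\<Sum>e\<in>?S. x e * (if e ! (t - 1) \<noteq> e ! t \<and> d = s_act t e then 1 else 0))
      + (\<Sum>e\<in>?S. x e * (if d = e then diagc t e else 0))"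
    unfolding T_act_def T_basis_alt by (simp add: distrib_left sum.distrib)
  also have "(\<Sum>e\<in>?S. x e * (if e ! (t - 1) \<noteq> e ! t \<and> d = s_act t e then 1 else 0))
      = (\<Sum>e\<in>?S. if e = s_act t d then x e * (if e ! (t - 1) \<noteq> e ! t then 1 else 0) else 0)"
  proof (rule sum.cong[OF refl])
    fix e assume e: "e \<in> ?S"
    have le: "length e = n" using e by (simp add: seqs_def)
    have "d = s_act t e \<longleftrightarrow> e = s_act t d"
      using s_act_invol[of t e] s_act_invol[of t d] t le lend by metis
    then show "x e * (if e ! (t - 1) \<noteq> e ! t \<and> d = s_act t e then 1 else 0)
      = (if e = s_act t d then x e * (if e ! (t - 1) \<noteq> e ! t then 1 else 0) else 0)" by auto
  qed
  also have "\<dots> = x (s_act t d) * (if s_act t d ! (t - 1) \<noteq> s_act t d ! t then 1 else 0)"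
    using sd finite_seqs by (simp add: sum.delta)
  also have "(\<Sum>e\<in>?S. x e * (if d = e then diagc t e else 0)) = x d * diagc t d"
    using d finite_seqs by (simp add: if_distrib sum.delta cong: if_cong)
  finally have "T_act n k t x d = x (s_act t d) * (if s_act t d ! (t - 1) \<noteq> s_act t d ! t then 1 else 0)
     + x d * diagc t d" .
  moreover have "s_act t d ! (t - 1) = d ! t" "s_act t d ! t = d ! (t - 1)"
    using t lend by (auto simp: s_act_nth)
  ultimately show ?thesis unfolding diagc_def by (auto simp: algebra_simps)
qed

lemma T_act_outside:
  assumes d: "d \<notin> seqs n k" and t: "1 \<le> t" "t < n"
  shows "T_act n k t x d = 0"
  unfolding T_act_def
proof (rule sum.neutral, rule ballI)
  fix e assume e: "e \<in> seqs n k"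
  have "d \<noteq> e" using d e by auto
  moreover have "d \<noteq> s_act t e" using d s_act_seqs[OF e t] by auto
  ultimately show "x e * T_basis t e d = 0" unfolding T_basis_alt by simp
qed


section \<open>Potential\<close>

fun hA :: "nat list \<Rightarrow> nat \<Rightarrow> nat" where
  "hA [] q = 0"
| "hA (t # ts) q = (if t = q then Suc (hA ts (q - 1)) else hA ts q)"

fun hD :: "nat list \<Rightarrow> nat \<Rightarrow> nat" where
  "hD [] q = 0"
| "hD (t # ts) q = (if t = Suc q then Suc (hD ts (Suc q)) else hD ts q)"

definition pterm :: "nat list \<Rightarrow> bool list \<Rightarrow> bool list \<Rightarrow> nat \<Rightarrow> nat" where
  "pterm ts w e q = (if e ! q \<and> \<not> w ! q then hA ts q else if \<not> e ! q \<and> w ! q then hD ts q else 0)"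

definition Upot :: "nat \<Rightarrow> nat list \<Rightarrow> bool list \<Rightarrow> bool list \<Rightarrow> nat" where
  "Upot n ts w e = (\<Sum>q<n. pterm ts w e q)"

lemma sum_split2:
  fixes f :: "nat \<Rightarrow> nat"
  assumes "a < n" "b < n" "a \<noteq> b"
  shows "(\<Sum>q<n. f q) = f a + f b + (\<Sum>q\<in>{..<n} - {a, b}. f q)"
proof -
  have "(\<Sum>q<n. f q) = f a + (\<Sum>q\<in>{..<n} - {a}. f q)"
    using assms by (subst sum.remove[of _ a]) auto
  also have "(\<Sum>q\<in>{..<n} - {a}. f q) = f b + (\<Sum>q\<in>{..<n} - {a} - {b}. f q)"
    using assms by (subst sum.remove[of _ b]) auto
  also have "{..<n} - {a} - {b} = {..<n} - {a, b}" by auto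
  finally show ?thesis by simp
qed

lemma Upot_step:
  assumes t: "1 \<le> t" "t < n" and lw: "length w = n" and le: "length e = n" and le': "length e' = n"
    and agree: "\<And>q. q < n \<Longrightarrow> q \<noteq> t - 1 \<Longrightarrow> q \<noteq> t \<Longrightarrow> e' ! q = e ! q"
    and w1: "w ! (t - 1)" and w2: "\<not> w ! t"
  shows "Upot n (t # ts) w e + (if e' ! (t - 1) then hA ts (t - 1) else 0) + (if \<not> e' ! t then hD ts t else 0)
       = Upot n ts (s_act t w) e' + (if \<not> e ! (t - 1) then Suc (hD ts t) else 0)
         + (if e ! t then Suc (hA ts (t - 1)) else 0)"
proof -
  let ?w' = "s_act t w"
  have w'1: "\<not> ?w' ! (t - 1)" and w'2: "?w' ! t" using t lw w1 w2 by (auto simp: s_act_nth)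
  have ne: "t - 1 \<noteq> t" "t - 1 < n" using t by auto
  have rest: "(\<Sum>q\<in>{..<n} - {t - 1, t}. pterm (t # ts) w e q) = (\<Sum>q\<in>{..<n} - {t - 1, t}. pterm ts ?w' e' q)"
  proof (rule sum.cong[OF refl])
    fix q assume q: "q \<in> {..<n} - {t - 1, t}"
    then have q': "q < n" "q \<noteq> t - 1" "q \<noteq> t" by auto
    have "?w' ! q = w ! q" using q' t lw by (simp add: s_act_nth)
    moreover have "t \<noteq> Suc q" using q' t by auto
    ultimately show "pterm (t # ts) w e q = pterm ts ?w' e' q"
      using q' agree[OF q'] by (simp add: pterm_def)
  qed
  have a1: "pterm (t # ts) w e (t - 1) = (if \<not> e ! (t - 1) then Suc (hD ts t) else 0)"
    using w1 t by (simp add: pterm_def)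
  have a2: "pterm (t # ts) w e t = (if e ! t then Suc (hA ts (t - 1)) else 0)"
    using w2 t by (simp add: pterm_def)
  have b1: "pterm ts ?w' e' (t - 1) = (if e' ! (t - 1) then hA ts (t - 1) else 0)"
    using w'1 by (simp add: pterm_def)
  have b2: "pterm ts ?w' e' t = (if \<not> e' ! t then hD ts t else 0)"
    using w'2 by (simp add: pterm_def)
  show ?thesis
    unfolding Upot_def sum_split2[OF ne(2) t(2) ne(1), of "pterm (t # ts) w e"]
      sum_split2[OF ne(2) t(2) ne(1), of "pterm ts ?w' e'"] rest a1 a2 b1 b2
    by simp
qed

lemma Upot_self: "Upot n ts w w = 0"
  unfolding Upot_def pterm_def by simp

definition Inv :: "nat \<Rightarrow> nat \<Rightarrow> nat list \<Rightarrow> bool list \<Rightarrow> (bool list \<Rightarrow> qv) \<Rightarrow> bool" where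
  "Inv n k ts w x \<longleftrightarrow> (\<forall>d. d \<notin> seqs n k \<longrightarrow> x d = 0) \<and>
     (\<forall>d\<in>seqs n k. ordge (Suc (Upot n ts w d)) (x d - bvec w d))"


lemma Inv_step:
  assumes t: "1 \<le> t" "t < n" and lw: "length w = n" and w1: "w ! (t - 1)" and w2: "\<not> w ! t"
    and r: "r \<ge> 1" and bound: "hA ts (t - 1) + hD ts t \<le> 2 * r - 2"
    and inv: "Inv n k (t # ts) w x"
  shows "Inv n k ts (s_act t w) (\<lambda>d. T_act n k t x d - cc r * x d)"
proof -
  let ?w' = "s_act t w"
  let ?a = "hA ts (t - 1)" and ?b = "hD ts t"
  define \<rho> where "\<rho> e = x e - bvec w e" for e
  have out: "\<And>d. d \<notin> seqs n k \<Longrightarrow> x d = 0" using inv by (simp add: Inv_def)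
  have rho: "\<And>e. e \<in> seqs n k \<Longrightarrow> ordge (Suc (Upot n (t # ts) w e)) (\<rho> e)"
    using inv by (simp add: Inv_def \<rho>_def)
  have xr: "\<And>e. x e = \<rho> e + bvec w e" by (simp add: \<rho>_def)
  have w'1: "\<not> ?w' ! (t - 1)" and w'2: "?w' ! t" using t lw w1 w2 by (auto simp: s_act_nth)
  have c: "ordge (2 * r - 1) (cc r)" using ordge_cc[OF r] .
  have part2: "ordge (Suc (Upot n ts ?w' d)) (T_act n k t x d - cc r * x d - bvec ?w' d)"
    if d: "d \<in> seqs n k" for d
  proof -
    have ld: "length d = n" using d by (simp add: seqs_def)
    have sd: "s_act t d \<in> seqs n k" using s_act_seqs[OF d t] .
    have lsd: "length (s_act t d) = n" using ld by simp
    have agree_s: "\<And>q. q < n \<Longrightarrow> q \<noteq> t - 1 \<Longrightarrow> q \<noteq> t \<Longrightarrow> d ! q = s_act t d ! q"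
      using t ld by (simp add: s_act_nth)
    have sd1: "s_act t d ! (t - 1) = d ! t" and sd2: "s_act t d ! t = d ! (t - 1)"
      using t ld by (auto simp: s_act_nth)
    have self: "Upot n (t # ts) w d + (if d ! (t - 1) then ?a else 0) + (if \<not> d ! t then ?b else 0)
       = Upot n ts ?w' d + (if \<not> d ! (t - 1) then Suc ?b else 0) + (if d ! t then Suc ?a else 0)"
      by (rule Upot_step[OF t lw ld ld _ w1 w2]) simp
    have swp: "Upot n (t # ts) w (s_act t d) + (if d ! (t - 1) then ?a else 0) + (if \<not> d ! t then ?b else 0)
       = Upot n ts ?w' d + (if \<not> d ! t then Suc ?b else 0) + (if d ! (t - 1) then Suc ?a else 0)"
      using Upot_step[OF t lw lsd ld agree_s w1 w2] sd1 sd2 by simp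
    have Tf: "T_act n k t x d =
      (if d ! (t - 1) = d ! t then - inverse vv * x d
       else if d ! (t - 1) then x (s_act t d)
       else x (s_act t d) + (vv - inverse vv) * x d)"
      using T_act_formula[OF d t] .
    show ?thesis
    proof (cases "d ! (t - 1)"; cases "d ! t")
      assume h: "d ! (t - 1)" "d ! t"
      have "d \<noteq> ?w'" "d \<noteq> w" using h w'1 w2 by auto
      then have eq: "T_act n k t x d - cc r * x d - bvec ?w' d = - (inverse vv * \<rho> d) - cc r * \<rho> d"
        using h Tf xr[of d] by (simp add: bvec_def algebra_simps)
      have U: "Upot n (t # ts) w d = Suc (Upot n ts ?w' d)" using self h by simp
      have r1: "ordge (Suc (Suc (Upot n ts ?w' d))) (\<rho> d)" using rho[OF d] U by simp
      have "ordge (Suc (Upot n ts ?w' d)) (inverse vv * \<rho> d)" using ordge_inv[OF r1] .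
      moreover have "ordge (Suc (Upot n ts ?w' d)) (cc r * \<rho> d)"
        using ordge_mono[OF ordge_mult[OF c r1]] by simp
      ultimately show ?thesis unfolding eq by (intro ordge_diff ordge_uminus)
    next
      assume h: "\<not> d ! (t - 1)" "\<not> d ! t"
      have "d \<noteq> ?w'" "d \<noteq> w" using h w'2 w1 by auto
      then have eq: "T_act n k t x d - cc r * x d - bvec ?w' d = - (inverse vv * \<rho> d) - cc r * \<rho> d"
        using h Tf xr[of d] by (simp add: bvec_def algebra_simps)
      have U: "Upot n (t # ts) w d = Suc (Upot n ts ?w' d)" using self h by simp
      have r1: "ordge (Suc (Suc (Upot n ts ?w' d))) (\<rho> d)" using rho[OF d] U by simp
      have "ordge (Suc (Upot n ts ?w' d)) (inverse vv * \<rho> d)" using ordge_inv[OF r1] .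
      moreover have "ordge (Suc (Upot n ts ?w' d)) (cc r * \<rho> d)"
        using ordge_mono[OF ordge_mult[OF c r1]] by simp
      ultimately show ?thesis unfolding eq by (intro ordge_diff ordge_uminus)
    next
      assume h: "d ! (t - 1)" "\<not> d ! t"
      have "d \<noteq> ?w'" using h w'1 by auto
      moreover have "s_act t d \<noteq> w" using h sd1 w1 by auto
      ultimately have eq: "T_act n k t x d - cc r * x d - bvec ?w' d
          = \<rho> (s_act t d) - cc r * \<rho> d - cc r * bvec w d"
        using h Tf xr[of d] xr[of "s_act t d"] by (simp add: bvec_def algebra_simps)
      have U1: "Upot n (t # ts) w (s_act t d) = Suc (Suc (Upot n ts ?w' d))" using swp h by simp
      have U2: "Upot n ts ?w' d = Upot n (t # ts) w d + ?a + ?b" using self h by simp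
      have "ordge (Suc (Upot n ts ?w' d)) (\<rho> (s_act t d))"
        using ordge_mono[OF rho[OF sd]] U1 by simp
      moreover have "ordge (Suc (Upot n ts ?w' d)) (cc r * \<rho> d)"
        using ordge_mono[OF ordge_mult[OF c rho[OF d]]] U2 bound r by simp
      moreover have "ordge (Suc (Upot n ts ?w' d)) (cc r * bvec w d)"
      proof (cases "d = w")
        case True
        then have "Upot n ts ?w' d = ?a + ?b" using U2 Upot_self[of n "t # ts" w] by simp
        then show ?thesis using True ordge_mono[OF c] bound r by (simp add: bvec_def)
      next
        case False then show ?thesis by (simp add: bvec_def ordge_0)
      qed
      ultimately show ?thesis unfolding eq by (intro ordge_diff)
    next
      assume h: "\<not> d ! (t - 1)" "d ! t"
      have "d \<noteq> w" using h w1 by auto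
      moreover have "bvec w (s_act t d) = bvec ?w' d"
        using s_act_invol[of t d] s_act_invol[of t w] t ld lw by (auto simp: bvec_def)
      ultimately have eq: "T_act n k t x d - cc r * x d - bvec ?w' d
          = \<rho> (s_act t d) + (vv * \<rho> d - inverse vv * \<rho> d - cc r * \<rho> d)"
        using h Tf xr[of d] xr[of "s_act t d"] by (simp add: bvec_def algebra_simps)
      have U1: "Upot n (t # ts) w (s_act t d) = Upot n ts ?w' d" using swp h by simp
      have U2: "Upot n (t # ts) w d = Suc (Suc (Upot n ts ?w' d + ?a + ?b))" using self h by simp
      have r1: "ordge (Suc (Suc (Upot n ts ?w' d))) (\<rho> d)"
        using ordge_mono[OF rho[OF d]] U2 by simp
      have "ordge (Suc (Upot n ts ?w' d)) (\<rho> (s_act t d))" using rho[OF sd] U1 by simp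
      moreover have "ordge (Suc (Upot n ts ?w' d)) (vv * \<rho> d)"
        using ordge_mono[OF ordge_mult[OF ordge_vv[of 1] r1]] by simp
      moreover have "ordge (Suc (Upot n ts ?w' d)) (inverse vv * \<rho> d)" using ordge_inv[OF r1] .
      moreover have "ordge (Suc (Upot n ts ?w' d)) (cc r * \<rho> d)"
        using ordge_mono[OF ordge_mult[OF c r1]] by simp
      ultimately show ?thesis unfolding eq by (intro ordge_add ordge_diff)
    qed
  qed
  show ?thesis unfolding Inv_def
  proof (intro conjI allI impI ballI)
    fix d assume "d \<notin> seqs n k"
    then show "T_act n k t x d - cc r * x d = 0" using T_act_outside[OF _ t] out by simp
  next
    fix d assume "d \<in> seqs n k"
    then show "ordge (Suc (Upot n ts ?w' d)) (T_act n k t x d - cc r * x d - bvec ?w' d)"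
      by (rule part2)
  qed
qed


lemma hA_append: "hA (xs @ ys) q = hA xs q + hA ys (q - hA xs q)"
  by (induction xs arbitrary: q) auto

lemma hD_append: "hD (xs @ ys) q = hD xs q + hD ys (q + hD xs q)"
  by (induction xs arbitrary: q) auto

lemma hA_upt_below: "q < a \<Longrightarrow> hA [a..<b] q = 0"
proof (induction "b - a" arbitrary: a)
  case 0 then show ?case by simp
next
  case (Suc m)
  then have "[a..<b] = a # [Suc a..<b]" by (simp add: upt_rec)
  with Suc show ?case by simp
qed

lemma hA_upt: "hA [a..<b] q = (if a \<le> q \<and> q < b then 1 else 0)"
proof (induction "b - a" arbitrary: a)
  case 0 then show ?case by simp
next
  case (Suc m)
  then have ab: "[a..<b] = a # [Suc a..<b]" by (simp add: upt_rec)
  show ?case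
  proof (cases "a = q")
    case True
    then have "hA [Suc a..<b] (q - 1) = 0" by (intro hA_upt_below) (use Suc in auto)
    then show ?thesis using ab True Suc by auto
  next
    case False
    then show ?thesis using ab Suc(1)[of "Suc a"] Suc(2) by auto
  qed
qed

lemma hD_upt: "Suc q \<le> b \<Longrightarrow> hD [Suc q..<b] q = b - Suc q"
proof (induction "b - Suc q" arbitrary: q)
  case 0 then show ?case by simp
next
  case (Suc m)
  then have "[Suc q..<b] = Suc q # [Suc (Suc q)..<b]" by (simp add: upt_rec)
  with Suc show ?case by auto
qed

lemma hD_below: "(\<forall>x\<in>set ys. x \<le> q) \<Longrightarrow> hD ys q = 0"
  by (induction ys) auto

declare rr.simps[simp del]

lemma rr_unfold: "rr lam i j = (if in_diag lam i j then max (rr lam i (j + 1)) (rr lam (i + 1) j) + 1 else 0)"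
  by (rule rr.simps)

lemma rr_ge_down: "in_diag lam i j \<Longrightarrow> rr lam i j \<ge> Suc (rr lam (i + 1) j)"
  by (subst rr_unfold) simp

lemma rr_ge_right: "in_diag lam i j \<Longrightarrow> rr lam i j \<ge> Suc (rr lam i (j + 1))"
  by (subst rr_unfold) simp

lemma rr_zero: "\<not> in_diag lam i j \<Longrightarrow> rr lam i j = 0"
  by (subst rr_unfold) simp

lemma rr_arm: "in_diag lam i j \<Longrightarrow> rr lam i j \<ge> lam ! (i - 1) - j + 1"
proof (induction "lam ! (i - 1) - j" arbitrary: j)
  case 0
  then show ?case using rr_ge_right[OF 0(2)] by simp
next
  case (Suc m)
  then have "in_diag lam i (j + 1)" by (auto simp: in_diag_def)
  moreover have "m = lam ! (i - 1) - (j + 1)" using Suc(2) by simp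
  ultimately have "rr lam i (j + 1) \<ge> lam ! (i - 1) - (j + 1) + 1" using Suc(1) by blast
  then show ?case using rr_ge_right[OF Suc(3)] Suc(2) by simp
qed

definition lamf :: "nat list \<Rightarrow> nat \<Rightarrow> nat" where
  "lamf lam i = (if 1 \<le> i \<and> i \<le> length lam then lam ! (i - 1) else 0)"

lemma lamf_mono:
  assumes "young_in_rect n k lam" "1 \<le> i'" "i' \<le> i"
  shows "lamf lam i \<le> lamf lam i'"
proof (cases "i \<le> length lam")
  case True
  have s: "sorted_wrt (\<ge>) lam" using assms(1) by (simp add: young_in_rect_def)
  show ?thesis
  proof (cases "i' = i")
    case False
    then have "lam ! (i - 1) \<le> lam ! (i' - 1)"
      using sorted_wrt_nth_less[OF s, of "i' - 1" "i - 1"] True assms by auto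
    then show ?thesis using True assms by (simp add: lamf_def)
  qed simp
next
  case False then show ?thesis by (simp add: lamf_def)
qed

lemma in_diag_lamf: "in_diag lam i j \<longleftrightarrow> 1 \<le> i \<and> i \<le> length lam \<and> 1 \<le> j \<and> j \<le> lamf lam i"
  by (auto simp: in_diag_def lamf_def)

definition rowb :: "nat list \<Rightarrow> nat \<Rightarrow> (nat \<times> nat) list" where
  "rowb lam i = map (\<lambda>j. (i, j)) [1..<lam ! (i - 1) + 1]"

definition rowsfrom :: "nat list \<Rightarrow> nat \<Rightarrow> (nat \<times> nat) list" where
  "rowsfrom lam i = concat (map (rowb lam) [i..<length lam + 1])"

lemma boxes_rowsfrom: "boxes lam = rowsfrom lam 1"
  unfolding boxes_def rowsfrom_def rowb_def by (rule refl)

lemma rowsfrom_Cons: "i \<le> length lam \<Longrightarrow> rowsfrom lam i = rowb lam i @ rowsfrom lam (Suc i)"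
  unfolding rowsfrom_def by (simp add: upt_rec)

lemma rowsfrom_Nil: "i > length lam \<Longrightarrow> rowsfrom lam i = []"
  unfolding rowsfrom_def by simp

definition site :: "nat \<Rightarrow> nat \<times> nat \<Rightarrow> nat" where
  "site k b = k + snd b - fst b"

lemma map_site_row: "i \<le> k \<Longrightarrow> map (site k) (map (\<lambda>j. (i, j)) [a..<b]) = [k + a - i..<k + b - i]"
proof -
  assume i: "i \<le> k"
  have "map (site k) (map (\<lambda>j. (i, j)) [a..<b]) = map (\<lambda>j. j + (k - i)) [a..<b]"
    using i by (auto simp: site_def)
  also have "\<dots> = [a + (k - i)..<b + (k - i)]"
    by (rule nth_equalityI) auto
  finally show ?thesis using i by (simp add: add.commute)
qed

lemma rowsfrom_sites_le:
  assumes y: "young_in_rect n k lam" and i: "1 \<le> i"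
  shows "\<forall>x\<in>set (map (site k) (rowsfrom lam i)). x \<le> k + lamf lam i - i"
proof
  fix x assume "x \<in> set (map (site k) (rowsfrom lam i))"
  then obtain i' j' where b: "(i', j') \<in> set (rowsfrom lam i)" "x = site k (i', j')" by auto
  then have i': "i \<le> i'" "i' \<le> length lam" "1 \<le> j'" "j' \<le> lam ! (i' - 1)"
    by (auto simp: rowsfrom_def rowb_def)
  have "lam ! (i' - 1) = lamf lam i'" using i' i by (simp add: lamf_def)
  moreover have "lamf lam i' \<le> lamf lam i" using lamf_mono[OF y i i'(1)] .
  ultimately show "x \<le> k + lamf lam i - i" using b(2) i' by (simp add: site_def)
qed


lemma young_len: "young_in_rect n k lam \<Longrightarrow> length lam \<le> k"
  by (simp add: young_in_rect_def)

lemma young_entry: "young_in_rect n k lam \<Longrightarrow> 1 \<le> i \<Longrightarrow> i \<le> length lam \<Longrightarrow> lam ! (i - 1) \<le> n - k \<and> 0 < lam ! (i - 1)"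
  unfolding young_in_rect_def by (metis Suc_le_eq diff_less le_less_trans less_one nth_mem not_le)

lemma hA_rows:
  assumes y: "young_in_rect n k lam" and i0: "1 \<le> i0" and J: "1 \<le> J"
  shows "hA (map (site k) (rowsfrom lam i0)) (k + J - i0) \<le> rr lam i0 J"
  using i0 J
proof (induction "length lam + 1 - i0" arbitrary: i0 J)
  case 0
  then show ?case by (simp add: rowsfrom_Nil)
next
  case (Suc m)
  show ?case
  proof (cases "i0 \<le> length lam")
    case False then show ?thesis by (simp add: rowsfrom_Nil)
  next
    case True
    have ik: "i0 \<le> k" using True young_len[OF y] by simp
    let ?l = "lam ! (i0 - 1)"
    have row: "map (site k) (rowb lam i0) = [k + 1 - i0..<k + (?l + 1) - i0]"
      unfolding rowb_def by (rule map_site_row[OF ik])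
    have IHa: "\<And>J'. 1 \<le> J' \<Longrightarrow> hA (map (site k) (rowsfrom lam (Suc i0))) (k + J' - Suc i0) \<le> rr lam (Suc i0) J'"
      using Suc by simp
    have lf: "lamf lam i0 = ?l" using True Suc(3) by (simp add: lamf_def)
    show ?thesis
    proof (cases "J \<le> ?l")
      case True2: True
      have "k + 1 - i0 \<le> k + J - i0 \<and> k + J - i0 < k + (?l + 1) - i0"
        using True2 ik Suc(4) by arith
      then have h1: "hA [k + 1 - i0..<k + (?l + 1) - i0] (k + J - i0) = 1"
        by (simp only: hA_upt) simp
      have "k + J - i0 - 1 = k + J - Suc i0" by simp
      then have "hA (map (site k) (rowsfrom lam i0)) (k + J - i0)
          = 1 + hA (map (site k) (rowsfrom lam (Suc i0))) (k + J - Suc i0)"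
        using rowsfrom_Cons[OF True] row h1 by (simp add: hA_append)
      also have "\<dots> \<le> 1 + rr lam (Suc i0) J" using IHa[OF Suc(4)] by simp
      also have "\<dots> \<le> rr lam i0 J"
        using rr_ge_down[of lam i0 J] True True2 Suc(3,4) by (simp add: in_diag_def)
      finally show ?thesis .
    next
      case False2: False
      have "\<not> (k + 1 - i0 \<le> k + J - i0 \<and> k + J - i0 < k + (?l + 1) - i0)"
        using False2 ik Suc(4) by arith
      then have h1: "hA [k + 1 - i0..<k + (?l + 1) - i0] (k + J - i0) = 0"
        by (simp only: hA_upt) simp
      have "k + J - i0 = k + Suc J - Suc i0" by simp
      then have "hA (map (site k) (rowsfrom lam i0)) (k + J - i0)
          = hA (map (site k) (rowsfrom lam (Suc i0))) (k + Suc J - Suc i0)"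
        using rowsfrom_Cons[OF True] row h1 by (simp add: hA_append)
      also have "\<dots> \<le> rr lam (Suc i0) (Suc J)" using IHa[of "Suc J"] by simp
      also have "rr lam (Suc i0) (Suc J) = 0"
      proof (rule rr_zero)
        show "\<not> in_diag lam (Suc i0) (Suc J)"
        proof
          assume d: "in_diag lam (Suc i0) (Suc J)"
          then have "Suc J \<le> lamf lam (Suc i0)" by (simp add: in_diag_lamf)
          moreover have "lamf lam (Suc i0) \<le> lamf lam i0" using lamf_mono[OF y Suc(3)] by simp
          ultimately show False using False2 lf by simp
        qed
      qed
      finally show ?thesis by simp
    qed
  qed
qed

lemma box_bound:
  assumes y: "young_in_rect n k lam" and i: "1 \<le> i" "i \<le> length lam"
    and j: "1 \<le> j" "j \<le> lam ! (i - 1)"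
  defines "ts \<equiv> map (site k) (map (\<lambda>j'. (i, j')) [j + 1..<lam ! (i - 1) + 1] @ rowsfrom lam (Suc i))"
  shows "hA ts (k + j - i - 1) + hD ts (k + j - i) \<le> 2 * rr lam i j - 2"
proof -
  let ?l = "lam ! (i - 1)"
  have ik: "i \<le> k" using i young_len[OF y] by simp
  have dg: "in_diag lam i j" using i j by (simp add: in_diag_def)
  have A: "map (site k) (map (\<lambda>j'. (i, j')) [j + 1..<?l + 1]) = [Suc (k + j - i)..<k + (?l + 1) - i]"
  proof -
    have "Suc (k + j) - i = Suc (k + j - i)" using ik by arith
    then show ?thesis using map_site_row[OF ik, of "j + 1" "?l + 1"] by simp
  qed
  have ts: "ts = [Suc (k + j - i)..<k + (?l + 1) - i] @ map (site k) (rowsfrom lam (Suc i))"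
    unfolding ts_def using A by simp
  have hA0: "hA [Suc (k + j - i)..<k + (?l + 1) - i] (k + j - i - 1) = 0"
    by (rule hA_upt_below) simp
  have "hA ts (k + j - i - 1) = hA (map (site k) (rowsfrom lam (Suc i))) (k + j - Suc i)"
    unfolding ts hA_append hA0 by simp
  also have "\<dots> \<le> rr lam (Suc i) j" using hA_rows[OF y _ j(1), of "Suc i"] by simp
  also have "\<dots> \<le> rr lam i j - 1" using rr_ge_down[OF dg] by simp
  finally have a: "hA ts (k + j - i - 1) \<le> rr lam i j - 1" .
  have hD1: "hD [Suc (k + j - i)..<k + (?l + 1) - i] (k + j - i) = ?l - j"
    using hD_upt[of "k + j - i" "k + (?l + 1) - i"] ik j by simp
  have q: "k + j - i + (?l - j) = k + lamf lam i - i"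
    using ik j i by (simp add: lamf_def)
  have hD2: "hD (map (site k) (rowsfrom lam (Suc i))) (k + lamf lam i - i) = 0"
  proof (rule hD_below, rule ballI)
    fix x assume "x \<in> set (map (site k) (rowsfrom lam (Suc i)))"
    then have "x \<le> k + lamf lam (Suc i) - Suc i" using rowsfrom_sites_le[OF y, of "Suc i"] by auto
    moreover have "lamf lam (Suc i) \<le> lamf lam i" using lamf_mono[OF y i(1)] by simp
    ultimately show "x \<le> k + lamf lam i - i" by simp
  qed
  have "hD ts (k + j - i) = ?l - j" unfolding ts hD_append hD1 q hD2 by simp
  also have "\<dots> \<le> rr lam i j - 1" using rr_arm[OF dg] by simp
  finally have b: "hD ts (k + j - i) \<le> rr lam i j - 1" .
  show ?thesis using a b by simp
qed


definition cur :: "nat list \<Rightarrow> nat \<Rightarrow> nat \<Rightarrow> nat \<Rightarrow> nat" where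
  "cur lam i j i' = (if i' < i then lamf lam i' else if i' = i then j - 1 else 0)"

definition Wset :: "nat \<Rightarrow> nat list \<Rightarrow> nat \<Rightarrow> nat \<Rightarrow> nat set" where
  "Wset k lam i j = (\<lambda>i'. k + cur lam i j i' - i') ` {1..k}"

definition lst :: "nat \<Rightarrow> nat set \<Rightarrow> bool list" where
  "lst n P = map (\<lambda>q. q \<in> P) [0..<n]"

lemma lst_length [simp]: "length (lst n P) = n"
  by (simp add: lst_def)

lemma lst_nth: "q < n \<Longrightarrow> lst n P ! q = (q \<in> P)"
  by (simp add: lst_def)

lemma s_act_lst:
  assumes t: "1 \<le> t" "t < n" and P: "t - 1 \<in> P" "t \<notin> P"
  shows "s_act t (lst n P) = lst n (P - {t - 1} \<union> {t})"
  by (rule nth_equalityI) (use t P in \<open>auto simp: s_act_nth lst_nth\<close>)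

lemma W_others:
  assumes y: "young_in_rect n k lam" and i: "1 \<le> i" "i \<le> length lam"
    and j: "1 \<le> j" "j \<le> lam ! (i - 1)"
    and i': "i' \<in> {1..k}" "i' \<noteq> i"
  shows "k + cur lam i j i' - i' \<noteq> k + j - i - 1" "k + cur lam i j i' - i' \<noteq> k + j - i"
    "cur lam i (j + 1) i' = cur lam i j i'"
proof -
  have ik: "i \<le> k" using i young_len[OF y] by simp
  have "k + cur lam i j i' - i' \<noteq> k + j - i - 1 \<and> k + cur lam i j i' - i' \<noteq> k + j - i"
  proof (cases "i' < i")
    case True
    have "lamf lam i \<le> lamf lam i'" using lamf_mono[OF y, of i' i] True i' by simp
    moreover have "lamf lam i = lam ! (i - 1)" using i by (simp add: lamf_def)
    ultimately have "j \<le> cur lam i j i'" using True j by (simp add: cur_def)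
    then obtain c where c: "c = cur lam i j i'" "j \<le> c" by simp
    have "k + j - i + 1 \<le> k + c - i'" using c(2) True ik by linarith
    then show ?thesis unfolding c(1)[symmetric] by linarith
  next
    case False
    then have "i < i'" using i' by simp
    moreover have "cur lam i j i' = 0" using False i' by (simp add: cur_def)
    moreover have "i' \<le> k" using i' by simp
    ultimately have "k + cur lam i j i' - i' < k + j - i - 1" using ik j(1) by linarith
    then show ?thesis by linarith
  qed
  then show "k + cur lam i j i' - i' \<noteq> k + j - i - 1" "k + cur lam i j i' - i' \<noteq> k + j - i" by auto
  show "cur lam i (j + 1) i' = cur lam i j i'" using i' by (simp add: cur_def)
qed

lemma W_facts:
  assumes y: "young_in_rect n k lam" and i: "1 \<le> i" "i \<le> length lam"
    and j: "1 \<le> j" "j \<le> lam ! (i - 1)"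
  shows "k + j - i - 1 \<in> Wset k lam i j" "k + j - i \<notin> Wset k lam i j"
    "Wset k lam i (j + 1) = Wset k lam i j - {k + j - i - 1} \<union> {k + j - i}"
proof -
  have ik: "i \<le> k" using i young_len[OF y] by simp
  have ci: "\<And>jj. cur lam i jj i = jj - 1" by (simp add: cur_def)
  have vi: "k + cur lam i j i - i = k + j - i - 1" using ci[of j] j(1) ik by linarith
  have vi': "k + cur lam i (j + 1) i - i = k + j - i" using ci[of "j + 1"] by simp
  have ne: "k + j - i \<noteq> k + j - i - 1" using j(1) ik by linarith
  have iK: "i \<in> {1..k}" using i ik by simp
  show A: "k + j - i - 1 \<in> Wset k lam i j" unfolding Wset_def
    by (rule image_eqI[where f="\<lambda>i'. k + cur lam i j i' - i'", OF vi[symmetric] iK])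
  show B: "k + j - i \<notin> Wset k lam i j"
  proof
    assume "k + j - i \<in> Wset k lam i j"
    then obtain i' where i': "i' \<in> {1..k}" "k + j - i = k + cur lam i j i' - i'" unfolding Wset_def by (rule imageE)
    show False
    proof (cases "i' = i")
      case True then show False using i'(2) vi ne by simp
    next
      case False then show False using W_others(2)[OF y i j i'(1) False] i'(2) by simp
    qed
  qed
  show "Wset k lam i (j + 1) = Wset k lam i j - {k + j - i - 1} \<union> {k + j - i}"
  proof (rule set_eqI, rule iffI)
    fix q assume "q \<in> Wset k lam i (j + 1)"
    then obtain i' where i': "i' \<in> {1..k}" "q = k + cur lam i (j + 1) i' - i'" unfolding Wset_def by (rule imageE)
    show "q \<in> Wset k lam i j - {k + j - i - 1} \<union> {k + j - i}"
    proof (cases "i' = i")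
      case True then have "q = k + j - i" using i'(2) vi' by simp
      then show ?thesis by simp
    next
      case False
      have q1: "q = k + cur lam i j i' - i'" using W_others(3)[OF y i j i'(1) False] i'(2) by simp
      have q2: "q \<noteq> k + j - i - 1" using W_others(1)[OF y i j i'(1) False] q1 by simp
      have "q \<in> Wset k lam i j" unfolding Wset_def
        by (rule image_eqI[where f="\<lambda>i'. k + cur lam i j i' - i'", OF q1 i'(1)])
      then show ?thesis using q2 by simp
    qed
  next
    fix q assume q: "q \<in> Wset k lam i j - {k + j - i - 1} \<union> {k + j - i}"
    show "q \<in> Wset k lam i (j + 1)"
    proof (cases "q = k + j - i")
      case True show ?thesis unfolding Wset_def
        by (rule image_eqI[where f="\<lambda>i'. k + cur lam i (j + 1) i' - i'", OF _ iK]) (use vi' True in simp)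
    next
      case False
      then have qW: "q \<in> Wset k lam i j" and qn: "q \<noteq> k + j - i - 1" using q by auto
      from qW obtain i' where i': "i' \<in> {1..k}" "q = k + cur lam i j i' - i'" unfolding Wset_def by (rule imageE)
      have "i' \<noteq> i" using i'(2) vi qn by auto
      then have "q = k + cur lam i (j + 1) i' - i'" using W_others(3)[OF y i j i'(1)] i'(2) by simp
      then show ?thesis unfolding Wset_def
        by (rule image_eqI[where f="\<lambda>i'. k + cur lam i (j + 1) i' - i'", OF _ i'(1)])
    qed
  qed
qed

lemma W_row:
  assumes "1 \<le> i" "i \<le> length lam"
  shows "Wset k lam i (lam ! (i - 1) + 1) = Wset k lam (Suc i) 1"
proof -
  have "cur lam i (lam ! (i - 1) + 1) i' = cur lam (Suc i) 1 i'" for i'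
  proof (cases "i' < i")
    case False
    then have "i' = i \<or> i' > i" by auto
    then show ?thesis using assms False by (auto simp: cur_def lamf_def)
  qed (simp add: cur_def)
  then show ?thesis unfolding Wset_def by simp
qed

lemma W_init:
  assumes "k \<le> n"
  shows "lst n (Wset k lam 1 1) = one_seq n k"
proof -
  have "Wset k lam 1 1 = {0..<k}"
  proof -
    have "\<And>i'. i' \<in> {1..k} \<Longrightarrow> cur lam 1 1 i' = 0" by (simp add: cur_def)
    then have "Wset k lam 1 1 = (\<lambda>i'. k - i') ` {1..k}" unfolding Wset_def by simp
    also have "\<dots> = {0..<k}"
    proof (intro set_eqI iffI)
      fix q assume "q \<in> (\<lambda>i'. k - i') ` {1..k}" then show "q \<in> {0..<k}" by auto
    next
      fix q assume "q \<in> {0..<k}"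
      then have "k - q \<in> {1..k}" "q = k - (k - q)" by auto
      then show "q \<in> (\<lambda>i'. k - i') ` {1..k}" by blast
    qed
    finally show ?thesis .
  qed
  then show ?thesis unfolding one_seq_def lst_def
    by (intro nth_equalityI) (use assms in \<open>auto simp: nth_append\<close>)
qed


definition xstep :: "nat \<Rightarrow> nat \<Rightarrow> nat list \<Rightarrow> nat \<times> nat \<Rightarrow> (bool list \<Rightarrow> qv) \<Rightarrow> bool list \<Rightarrow> qv" where
  "xstep n k lam = (\<lambda>(i, j) y. (let r = rr lam i j in (\<lambda>d. T_act n k (k + j - i) y d - vv ^ r / qint r * y d)))"

lemma X_act_fold: "X_act n k lam x = fold (xstep n k lam) (boxes lam) x"
  unfolding X_act_def xstep_def by (rule refl)

lemma xstep_eq: "xstep n k lam (i, j) y = (\<lambda>d. T_act n k (k + j - i) y d - cc (rr lam i j) * y d)"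
  by (simp add: xstep_def cc_def Let_def)

definition wstep :: "nat \<Rightarrow> nat \<times> nat \<Rightarrow> bool list \<Rightarrow> bool list" where
  "wstep k = (\<lambda>(i, j) e'. s_act (k + j - i) e')"

lemma w_act_fold: "w_act k lam e = fold (wstep k) (boxes lam) e"
  unfolding w_act_def wstep_def by (rule refl)

lemma site_range:
  assumes y: "young_in_rect n k lam" and kn: "k \<le> n - 1" and k1: "1 \<le> k"
    and i: "1 \<le> i" "i \<le> length lam" and j: "1 \<le> j" "j \<le> lam ! (i - 1)"
  shows "1 \<le> k + j - i" "k + j - i < n"
proof -
  have ik: "i \<le> k" using i young_len[OF y] by simp
  have "lam ! (i - 1) \<le> n - k" using young_entry[OF y i] by simp
  then show "1 \<le> k + j - i" "k + j - i < n" using ik j i kn k1 by linarith+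
qed

lemma row_inv:
  assumes y: "young_in_rect n k lam" and kn: "k \<le> n - 1" and k1: "1 \<le> k"
    and i: "1 \<le> i" "i \<le> length lam"
  shows "1 \<le> j \<Longrightarrow> j \<le> lam ! (i - 1) + 1 \<Longrightarrow>
    Inv n k (map (site k) (map (\<lambda>j'. (i, j')) [j..<lam ! (i - 1) + 1] @ rowsfrom lam (Suc i)))
      (lst n (Wset k lam i j)) x \<Longrightarrow>
    Inv n k (map (site k) (rowsfrom lam (Suc i))) (lst n (Wset k lam i (lam ! (i - 1) + 1)))
      (fold (xstep n k lam) (map (\<lambda>j'. (i, j')) [j..<lam ! (i - 1) + 1]) x)"
proof (induction "lam ! (i - 1) + 1 - j" arbitrary: j x)
  case 0
  then have "j = lam ! (i - 1) + 1" by simp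
  then show ?case using 0 by simp
next
  case (Suc m)
  let ?l = "lam ! (i - 1)"
  have j: "1 \<le> j" "j \<le> ?l" using Suc by auto
  define t where "t = k + j - i"
  have t: "1 \<le> t" "t < n" unfolding t_def using site_range[OF y kn k1 i j] by auto
  have up: "[j..<?l + 1] = j # [Suc j..<?l + 1]" using j by (simp add: upt_conv_Cons)
  define ts where "ts = map (site k) (map (\<lambda>j'. (i, j')) [j + 1..<?l + 1] @ rowsfrom lam (Suc i))"
  have bound: "hA ts (t - 1) + hD ts t \<le> 2 * rr lam i j - 2"
    unfolding ts_def t_def using box_bound[OF y i j] by simp
  have dg: "in_diag lam i j" using i j by (simp add: in_diag_def)
  have r1: "rr lam i j \<ge> 1" using rr_ge_right[OF dg] by simp
  have W1: "t - 1 \<in> Wset k lam i j" and W2: "t \<notin> Wset k lam i j"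
    unfolding t_def using W_facts[OF y i j] by auto
  have w1: "lst n (Wset k lam i j) ! (t - 1)" using W1 t by (simp add: lst_nth)
  have w2: "\<not> lst n (Wset k lam i j) ! t" using W2 t by (simp add: lst_nth)
  have hyp: "Inv n k (t # ts) (lst n (Wset k lam i j)) x"
    using Suc(5) unfolding up ts_def t_def by (simp add: site_def)
  have st: "Inv n k ts (s_act t (lst n (Wset k lam i j))) (xstep n k lam (i, j) x)"
    unfolding xstep_eq t_def[symmetric] by (rule Inv_step[OF t _ w1 w2 r1 bound hyp]) simp
  have "s_act t (lst n (Wset k lam i j)) = lst n (Wset k lam i (j + 1))"
    using s_act_lst[OF t W1 W2] W_facts(3)[OF y i j] unfolding t_def by simp
  with st have st': "Inv n k ts (lst n (Wset k lam i (Suc j))) (xstep n k lam (i, j) x)" by simp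
  have "Inv n k (map (site k) (rowsfrom lam (Suc i))) (lst n (Wset k lam i (?l + 1)))
      (fold (xstep n k lam) (map (\<lambda>j'. (i, j')) [Suc j..<?l + 1]) (xstep n k lam (i, j) x))"
    by (rule Suc(1)) (use Suc(2) j st' ts_def in auto)
  then show ?case unfolding up by simp
qed

lemma rows_inv:
  assumes y: "young_in_rect n k lam" and kn: "k \<le> n - 1" and k1: "1 \<le> k"
  shows "1 \<le> i \<Longrightarrow> i \<le> Suc (length lam) \<Longrightarrow>
    Inv n k (map (site k) (rowsfrom lam i)) (lst n (Wset k lam i 1)) x \<Longrightarrow>
    Inv n k [] (lst n (Wset k lam (Suc (length lam)) 1)) (fold (xstep n k lam) (rowsfrom lam i) x)"
proof (induction "Suc (length lam) - i" arbitrary: i x)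
  case 0
  then have "i = Suc (length lam)" by simp
  then show ?case using 0 by (simp add: rowsfrom_Nil)
next
  case (Suc m)
  then have i: "1 \<le> i" "i \<le> length lam" by auto
  have rf: "rowsfrom lam i = map (\<lambda>j. (i, j)) [1..<lam ! (i - 1) + 1] @ rowsfrom lam (Suc i)"
    using rowsfrom_Cons[OF i(2)] by (simp add: rowb_def)
  have "Inv n k (map (site k) (rowsfrom lam (Suc i))) (lst n (Wset k lam i (lam ! (i - 1) + 1)))
      (fold (xstep n k lam) (map (\<lambda>j'. (i, j')) [1..<lam ! (i - 1) + 1]) x)"
    by (rule row_inv[OF y kn k1 i]) (use Suc(5) rf in auto)
  then have "Inv n k (map (site k) (rowsfrom lam (Suc i))) (lst n (Wset k lam (Suc i) 1))
      (fold (xstep n k lam) (map (\<lambda>j'. (i, j')) [1..<lam ! (i - 1) + 1]) x)"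
    using W_row[OF i] by simp
  then have "Inv n k [] (lst n (Wset k lam (Suc (length lam)) 1))
      (fold (xstep n k lam) (rowsfrom lam (Suc i)) (fold (xstep n k lam) (map (\<lambda>j'. (i, j')) [1..<lam ! (i - 1) + 1]) x))"
    by (intro Suc(1)) (use Suc(2) i in auto)
  then show ?case unfolding rf by simp
qed

lemma row_w:
  assumes y: "young_in_rect n k lam" and kn: "k \<le> n - 1" and k1: "1 \<le> k"
    and i: "1 \<le> i" "i \<le> length lam"
  shows "1 \<le> j \<Longrightarrow> j \<le> lam ! (i - 1) + 1 \<Longrightarrow>
    fold (wstep k) (map (\<lambda>j'. (i, j')) [j..<lam ! (i - 1) + 1]) (lst n (Wset k lam i j))
      = lst n (Wset k lam i (lam ! (i - 1) + 1))"
proof (induction "lam ! (i - 1) + 1 - j" arbitrary: j)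
  case 0
  then have "j = lam ! (i - 1) + 1" by simp
  then show ?case by simp
next
  case (Suc m)
  let ?l = "lam ! (i - 1)"
  have j: "1 \<le> j" "j \<le> ?l" using Suc by auto
  define t where "t = k + j - i"
  have t: "1 \<le> t" "t < n" unfolding t_def using site_range[OF y kn k1 i j] by auto
  have up: "[j..<?l + 1] = j # [Suc j..<?l + 1]" using j by (simp add: upt_conv_Cons)
  have W1: "t - 1 \<in> Wset k lam i j" and W2: "t \<notin> Wset k lam i j"
    unfolding t_def using W_facts[OF y i j] by auto
  have "wstep k (i, j) (lst n (Wset k lam i j)) = lst n (Wset k lam i (Suc j))"
    using s_act_lst[OF t W1 W2] W_facts(3)[OF y i j] unfolding t_def by (simp add: wstep_def)
  moreover have "fold (wstep k) (map (\<lambda>j'. (i, j')) [Suc j..<?l + 1]) (lst n (Wset k lam i (Suc j)))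
      = lst n (Wset k lam i (?l + 1))"
    by (rule Suc(1)) (use Suc(2) j in auto)
  ultimately show ?case unfolding up by simp
qed

lemma rows_w:
  assumes y: "young_in_rect n k lam" and kn: "k \<le> n - 1" and k1: "1 \<le> k"
  shows "1 \<le> i \<Longrightarrow> i \<le> Suc (length lam) \<Longrightarrow>
    fold (wstep k) (rowsfrom lam i) (lst n (Wset k lam i 1)) = lst n (Wset k lam (Suc (length lam)) 1)"
proof (induction "Suc (length lam) - i" arbitrary: i)
  case 0
  then have "i = Suc (length lam)" by simp
  then show ?case by (simp add: rowsfrom_Nil)
next
  case (Suc m)
  then have i: "1 \<le> i" "i \<le> length lam" by auto
  have rf: "rowsfrom lam i = map (\<lambda>j. (i, j)) [1..<lam ! (i - 1) + 1] @ rowsfrom lam (Suc i)"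
    using rowsfrom_Cons[OF i(2)] by (simp add: rowb_def)
  have "fold (wstep k) (map (\<lambda>j'. (i, j')) [1..<lam ! (i - 1) + 1]) (lst n (Wset k lam i 1))
      = lst n (Wset k lam (Suc i) 1)"
    using row_w[OF y kn k1 i, of 1] W_row[OF i] by simp
  moreover have "fold (wstep k) (rowsfrom lam (Suc i)) (lst n (Wset k lam (Suc i) 1))
      = lst n (Wset k lam (Suc (length lam)) 1)"
    by (intro Suc(1)) (use Suc(2) i in auto)
  ultimately show ?case unfolding rf by simp
qed

lemma fold_wstep_seqs:
  "(\<forall>b\<in>set bs. 1 \<le> site k b \<and> site k b < n) \<Longrightarrow> e \<in> seqs n k \<Longrightarrow> fold (wstep k) bs e \<in> seqs n k"
proof (induction bs arbitrary: e)
  case Nil then show ?case by simp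
next
  case (Cons b bs)
  obtain i j where b: "b = (i, j)" by (cases b)
  have "wstep k b e \<in> seqs n k"
    using s_act_seqs[OF Cons(3)] Cons(2) b by (simp add: wstep_def site_def)
  then show ?case using Cons by simp
qed

lemma boxes_sites:
  assumes y: "young_in_rect n k lam" and kn: "k \<le> n - 1" and k1: "1 \<le> k"
  shows "\<forall>b\<in>set (boxes lam). 1 \<le> site k b \<and> site k b < n"
proof
  fix b assume "b \<in> set (boxes lam)"
  then obtain i j where b: "b = (i, j)" "1 \<le> i" "i \<le> length lam" "1 \<le> j" "j \<le> lam ! (i - 1)"
    by (auto simp: boxes_def)
  then show "1 \<le> site k b \<and> site k b < n"
    using site_range[OF y kn k1 b(2,3,4,5)] by (simp add: site_def)
qed

lemma one_seq_seqs: "k \<le> n \<Longrightarrow> one_seq n k \<in> seqs n k"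
  by (simp add: one_seq_def seqs_def)

lemma Upot_Nil: "Upot n [] w e = 0"
  unfolding Upot_def pterm_def by simp


theorem mainTheorem4:
  fixes n k :: nat and lam :: "nat list"
  assumes "1 \<le> k" and "k \<le> n - 1"
    and "young_in_rect n k lam"
  shows "\<exists>f :: bool list \<Rightarrow> qv. (\<forall>e\<in>seqs n k. vanishes_at_0 (f e)) \<and>
           X_act n k lam (bvec (one_seq n k)) =
             (\<lambda>d. bvec (w_act k lam (one_seq n k)) d + (\<Sum>e\<in>seqs n k. f e * bvec e d))"
proof -
  note k1 = assms(1) and kn = assms(2) and y = assms(3)
  have kn': "k \<le> n" using kn by simp
  let ?one = "one_seq n k"
  let ?X = "X_act n k lam (bvec ?one)"
  let ?w = "w_act k lam ?one"
  let ?WF = "lst n (Wset k lam (Suc (length lam)) 1)"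
  have one: "?one \<in> seqs n k" using one_seq_seqs[OF kn'] .
  have init: "lst n (Wset k lam 1 1) = ?one" using W_init[OF kn'] .
  have inv0: "Inv n k (map (site k) (rowsfrom lam 1)) (lst n (Wset k lam 1 1)) (bvec ?one)"
    unfolding init Inv_def using one by (auto simp: bvec_def ordge_0)
  have invF: "Inv n k [] ?WF ?X"
    unfolding X_act_fold boxes_rowsfrom by (rule rows_inv[OF y kn k1 _ _ inv0]) auto
  have wF: "?w = ?WF"
    unfolding w_act_fold boxes_rowsfrom using rows_w[OF y kn k1, of 1] init by simp
  have wseq: "?w \<in> seqs n k"
    unfolding w_act_fold using fold_wstep_seqs[OF boxes_sites[OF y kn k1] one] .
  define f where "f e = ?X e - bvec ?w e" for e
  have van: "\<forall>e\<in>seqs n k. vanishes_at_0 (f e)"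
  proof
    fix e assume "e \<in> seqs n k"
    then have "ordge (Suc (Upot n [] ?WF e)) (?X e - bvec ?WF e)" using invF by (simp add: Inv_def)
    then show "vanishes_at_0 (f e)" unfolding f_def wF Upot_Nil by (intro vanishes_ordge1) simp
  qed
  have eq: "?X = (\<lambda>d. bvec ?w d + (\<Sum>e\<in>seqs n k. f e * bvec e d))"
  proof
    fix d
    show "?X d = bvec ?w d + (\<Sum>e\<in>seqs n k. f e * bvec e d)"
    proof (cases "d \<in> seqs n k")
      case True
      then show ?thesis by (simp add: bvec_sum[OF finite_seqs] f_def)
    next
      case False
      have "?X d = 0" using invF False by (simp add: Inv_def)
      moreover have "bvec ?w d = 0" using wseq False by (auto simp: bvec_def)
      ultimately show ?thesis using False by (simp add: bvec_sum[OF finite_seqs])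
    qed
  qed
  show ?thesis using van eq by blast
qed

end
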